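(* Let $A,B,H,K$ be events with $H\ne\emptyset$, $K\ne\emptyset$. For each coherent prevision assessment $(x,y,z)$ on $\{A|H,B|K,(A|H)\wedge(B|K)\}$ there exists $\lambda\in[0,+\infty]$ such that, as random quantities, $(A|H)\wedge(B|K)=T_\lambda(A|H,B|K)$.
   Context: Events are identified with their indicators; $\bar E$ is the negation of $E$. For $H\ne\emptyset$ the conditional event $E|H$ is true if $EH$ is true, false if $\bar EH$ is true, void if $\bar H$ is true; with $P(E|H)=x$ it is identified with the random quantity $EH+x\bar H$, and a conditional random quantity $X|H$ with prevision $\mu$ with $XH+\mu\bar H$. Coherence (de Finetti): an assessment $(\mu_1,\dots,\mu_m)$ on $\{X_1|H_1,\dots,X_m|H_m\}$ is coherent iff for all real stakes $s_i$ the gain $G=\sum_is_iH_i(X_i-\mu_i)$, restricted to $H_1\vee\dots\vee H_m$, satisfies $\min G\le0\le\max G$. Conjunction of two conditional events: given $P(A|H)=x$, $P(B|K)=y$ and $z=\mathbb P[(AHBK+x\bar HBK+y\bar KAH)|(H\vee K)]$, the conjunction is $(A|H)\wedge(B|K)=AHBK+x\bar HBK+y\bar KAH+z\bar H\bar K$, i.e. it equals $1$ if $AHBK$ is true, $0$ if $\bar AH\vee\bar BK$ is true, $x$ if $\bar HBK$ is true, $y$ if $AH\bar K$ is true, $z$ if $\bar H\bar K$ is true; its prevision is $z$. Frank t-norms $T_\lambda:[0,1]^2\to[0,1]$, $\lambda\in[0,+\infty]$: $T_0(x,y)=\min\{x,y\}$, $T_1(x,y)=xy$, $T_{+\infty}(x,y)=\max\{x+y-1,0\}$,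 and $T_\lambda(x,y)=\log_\lambda\big(1+\frac{(\lambda^x-1)(\lambda^y-1)}{\lambda-1}\big)$ otherwise. $T_\lambda(A|H,B|K)$ denotes the random quantity obtained by applying $T_\lambda$ pointwise to the values of $A|H$ and $B|K$. *)

theory Defs
  imports Complex_Main "HOL-Library.Extended_Real"
begin

text \<open>Possible worlds are elements of a type 'w; events are sets of worlds, identified
with their indicators.\<close>

definition ind :: "'w set \<Rightarrow> 'w \<Rightarrow> real" where
  "ind E w = (if w \<in> E then 1 else 0)"

text \<open>Conditional event E|H with P(E|H)=x, as random quantity EH + x(not H).\<close>
definition cond_event :: "'w set \<Rightarrow> 'w set \<Rightarrow> real \<Rightarrow> 'w \<Rightarrow> real" where
  "cond_event E H x w = ind (E \<inter> H) w + x * ind (- H) w"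

definition coherent :: "(('w \<Rightarrow> real) \<times> 'w set) list \<Rightarrow> real list \<Rightarrow> bool" where
  "coherent F mu \<longleftrightarrow> length mu = length F \<and>
     (\<forall>s :: nat \<Rightarrow> real.
        let G = (\<lambda>w. \<Sum>i<length F. s i * ind (snd (F ! i)) w * (fst (F ! i) w - mu ! i));
            U = \<Union> (set (map snd F))
        in (\<exists>w\<in>U. G w \<le> 0) \<and> (\<exists>w\<in>U. 0 \<le> G w))"

text \<open>The random quantity AHBK + x(not H)BK + y(not K)AH, whose conditional prevision
given H or K is the prevision z of the conjunction.\<close>
definition conj_num :: "'w set \<Rightarrow> 'w set \<Rightarrow> 'w set \<Rightarrow> 'w set \<Rightarrow> real \<Rightarrow> real \<Rightarrow> 'w \<Rightarrow> real" where
  "conj_num A H B K x y w =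
     ind (A \<inter> H \<inter> B \<inter> K) w + x * ind (- H \<inter> B \<inter> K) w + y * ind (- K \<inter> A \<inter> H) w"

definition conj_ce :: "'w set \<Rightarrow> 'w set \<Rightarrow> 'w set \<Rightarrow> 'w set \<Rightarrow> real \<Rightarrow> real \<Rightarrow> real \<Rightarrow> 'w \<Rightarrow> real" where
  "conj_ce A H B K x y z w = conj_num A H B K x y w + z * ind (- H \<inter> - K) w"

definition frank :: "ereal \<Rightarrow> real \<Rightarrow> real \<Rightarrow> real" where
  "frank l u v =
     (if l = 0 then min u v
      else if l = 1 then u * v
      else if l = \<infinity> then max (u + v - 1) 0
      else (let r = real_of_ereal l in
            log r (1 + (r powr u - 1) * (r powr v - 1) / (r - 1))))"

end

theory Submission
  imports Defs "HOL-Real_Asymp.Real_Asymp"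
begin


definition FF :: "real \<Rightarrow> real \<Rightarrow> real \<Rightarrow> real" where
  "FF x y r = log r (1 + (r powr x - 1) * (r powr y - 1) / (r - 1))"

lemma frank_ereal: "0 < r \<Longrightarrow> r \<noteq> 1 \<Longrightarrow> frank (ereal r) u v = FF u v r"
  by (simp add: frank_def FF_def one_ereal_def zero_ereal_def)

lemma FF_lim_right1: "0 < x \<Longrightarrow> x < 1 \<Longrightarrow> 0<y \<Longrightarrow> y < 1 \<Longrightarrow> (FF x y \<longlongrightarrow> x*y) (at_right 1)"
  unfolding FF_def by real_asymp
lemma FF_lim_left1: "0 < x \<Longrightarrow> x < 1 \<Longrightarrow> 0<y \<Longrightarrow> y < 1 \<Longrightarrow> (FF x y \<longlongrightarrow> x*y) (at_left 1)"
  unfolding FF_def by real_asymp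

lemma FF_lim0_lt: "0 < x \<Longrightarrow> x < 1 \<Longrightarrow> 0<y \<Longrightarrow> y < 1 \<Longrightarrow> x < y \<Longrightarrow> (FF x y \<longlongrightarrow> x) (at_right 0)"
  unfolding FF_def by real_asymp
lemma FF_lim0_eq: "0 < x \<Longrightarrow> x < 1  \<Longrightarrow> (FF x x \<longlongrightarrow> x) (at_right 0)"
  unfolding FF_def by real_asymp
lemma FF_sym: "FF x y r = FF y x r"
  unfolding FF_def by (simp add: mult.commute)

lemma FF_lim0: "0 < x \<Longrightarrow> x < 1 \<Longrightarrow> 0<y \<Longrightarrow> y < 1 \<Longrightarrow> (FF x y \<longlongrightarrow> min x y) (at_right 0)"
proof -
  assume a: "0 < x" "x < 1" "0<y" "y < 1"
  consider "x < y" | "x = y" | "y < x" by linarith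
  then show ?thesis
  proof cases
    case 1 then show ?thesis using a FF_lim0_lt by (simp add: min_def)
  next
    case 2 then show ?thesis using a FF_lim0_eq by (simp add: min_def)
  next
    case 3
    have "FF x y = FF y x" by (rule ext) (rule FF_sym)
    then show ?thesis using a 3 FF_lim0_lt[of y x] by (simp add: min_def)
  qed
qed

lemma FF_limtop_gt: "0 < x \<Longrightarrow> x < 1 \<Longrightarrow> 0<y \<Longrightarrow> y < 1 \<Longrightarrow> x + y > 1 \<Longrightarrow> (FF x y \<longlongrightarrow> x + y - 1) at_top"
  unfolding FF_def by real_asymp
lemma FF_limtop_lt: "0 < x \<Longrightarrow> x < 1 \<Longrightarrow> 0<y \<Longrightarrow> y < 1 \<Longrightarrow> x + y < 1 \<Longrightarrow> (FF x y \<longlongrightarrow> 0) at_top"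
  unfolding FF_def by real_asymp
lemma FF_limtop_eq: "0 < x \<Longrightarrow> x < 1 \<Longrightarrow> (FF x (1-x) \<longlongrightarrow> 0) at_top"
  unfolding FF_def by real_asymp

lemma FF_limtop: "0 < x \<Longrightarrow> x < 1 \<Longrightarrow> 0<y \<Longrightarrow> y < 1 \<Longrightarrow> (FF x y \<longlongrightarrow> max (x+y-1) 0) at_top"
proof -
  assume a: "0 < x" "x < 1" "0<y" "y < 1"
  consider "x + y < 1" | "y = 1 - x" | "x + y > 1" by linarith
  then show ?thesis
  proof cases
    case 1 then show ?thesis using a FF_limtop_lt by (simp add: max_def)
  next
    case 2 then show ?thesis using a FF_limtop_eq by (simp add: max_def)
  next
    case 3 then show ?thesis using a FF_limtop_gt by (simp add: max_def)
  qed
qed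

lemma powr_anti: "0 < r \<Longrightarrow> r < 1 \<Longrightarrow> a < b \<Longrightarrow> r powr b < r powr (a::real)"
proof -
  assume "0 < r" "r < 1" "a < b"
  then have "ln r < 0" by simp
  then have "b * ln r < a * ln r" using \<open>a < b\<close> by (simp add: mult_strict_right_mono_neg)
  then show ?thesis using \<open>0 < r\<close> by (simp add: powr_def)
qed

lemma N_pos:
  fixes x y r :: real
  assumes "0 < x" "x < 1" "0<y" "y < 1" "0 < r" "r \<noteq> 1"
  shows "0 < 1 + (r powr x - 1) * (r powr y - 1) / (r - 1)"
proof (cases "r > 1")
  case True
  have "r powr x > 1" "r powr y > 1" using gr_one_powr[of r x] gr_one_powr[of r y] True assms by auto
  then show ?thesis using True by (simp add: add_pos_nonneg)
next
  case False
  then have r1: "r < 1" using assms by auto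
  have "r powr x > r powr 1" using assms r1 powr_anti[of r x 1] by auto
  then have h1: "1 - r powr x < 1 - r" by simp
  have h2: "0 < 1 - r powr y" "1 - r powr y < 1" using assms r1 powr_anti[of r 0 y]
    by auto
  have h3: "0 \<le> 1 - r powr x" using assms r1 powr_anti[of r 0 x] by auto
  have "(1 - r powr x) * (1 - r powr y) < 1 - r"
  proof -
    have "(1 - r powr x) * (1 - r powr y) \<le> (1 - r powr x)" using h2 h3
      by (simp add: mult_left_le)
    then show ?thesis using h1 by linarith
  qed
  then have "(r powr x - 1) * (r powr y - 1) / (1 - r) < 1" using r1
    by (simp add: field_simps)
  then show ?thesis using r1 by (simp add: field_simps)  
qed

lemma FF_cont:
  fixes x y a b :: real
  assumes "0 < x" "x < 1" "0<y" "y < 1" "0 < a" "1 \<notin> {a..b}"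
  shows "continuous_on {a..b} (FF x y)"
proof -
  have S: "\<forall>r\<in>{a..b}. 0 < r \<and> r \<noteq> 1" using assms by auto
  have cN: "continuous_on {a..b} (\<lambda>r. 1 + (r powr x - 1) * (r powr y - 1) / (r - 1))"
    using S by (intro continuous_intros) auto
  have "continuous_on {a..b} (\<lambda>r. log r (1 + (r powr x - 1) * (r powr y - 1) / (r - 1)))"
  proof (rule continuous_on_log[OF continuous_on_id cN])
    show "\<forall>r\<in>{a..b}. 0 < r" "\<forall>r\<in>{a..b}. r \<noteq> 1" using S by auto
    show "\<forall>r\<in>{a..b}. 1 + (r powr x - 1) * (r powr y - 1) / (r - 1) \<noteq> 0"
      using S N_pos[OF assms(1-4)] by (metis less_irrefl)
  qed
  then show ?thesis unfolding FF_def by simp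
qed


lemma frank_surj:
  fixes x y z :: real
  assumes "0\<le>x" "x\<le>1" "0\<le>y" "y\<le>1" "max (x+y-1) 0 \<le> z" "z \<le> min x y"
  shows "\<exists>l::ereal. 0 \<le> l \<and> frank l x y = z"
proof -
  consider "z = min x y" | "z = max (x+y-1) 0" | "z = x*y"
    | "max (x+y-1) 0 < z" "z < min x y" "z \<noteq> x*y" using assms by linarith
  then show ?thesis
  proof cases
    case 1 then show ?thesis by (intro exI[of _ 0]) (simp add: frank_def)
  next
    case 2 then show ?thesis by (intro exI[of _ \<infinity>]) (simp add: frank_def)
  next
    case 3 then show ?thesis by (intro exI[of _ 1]) (simp add: frank_def)
  next
    case 4
    have xy: "0 < x" "x < 1" "0 < y" "y < 1" using 4 assms by (auto simp: min_def max_def split: if_splits)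
    have ex: "\<exists>r. 0 < r \<and> r \<noteq> 1 \<and> FF x y r = z"
    proof (cases "z < x*y")
      case True
      have "eventually (\<lambda>r. z < FF x y r) (at_right 1)"
        using order_tendstoD(1)[OF FF_lim_right1[OF xy] True] .
      then obtain b where b: "b > 1" "\<forall>r>1. r < b \<longrightarrow> z < FF x y r"
        by (auto simp: eventually_at_right_field)
      define a where "a = (1+b)/2"
      have a: "1 < a" "z < FF x y a" using b by (auto simp: a_def)
      have "eventually (\<lambda>r. FF x y r < z) at_top"
        using order_tendstoD(2)[OF FF_limtop[OF xy] 4(1)] .
      then obtain N where N: "\<forall>r\<ge>N. FF x y r < z" by (auto simp: eventually_at_top_linorder)
      define c where "c = max N (a+1)"
      have c: "a \<le> c" "FF x y c < z" using N by (auto simp: c_def)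
      have "continuous_on {a..c} (FF x y)" using a by (intro FF_cont[OF xy]) auto
      then obtain r where "a \<le> r" "r \<le> c" "FF x y r = z"
        using IVT2'[of "FF x y" c z a] a c by auto
      then show ?thesis using a by (intro exI[of _ r]) auto
    next
      case False
      then have zg: "x*y < z" using 4 by auto
      have "eventually (\<lambda>r. z < FF x y r) (at_right 0)"
        using order_tendstoD(1)[OF FF_lim0[OF xy] 4(2)] .
      then obtain b where b: "b > 0" "\<forall>r>0. r < b \<longrightarrow> z < FF x y r"
        by (auto simp: eventually_at_right_field)
      define a where "a = min (b/2) (1/2)"
      have a: "0 < a" "a < 1" "z < FF x y a" using b by (auto simp: a_def)
      have "eventually (\<lambda>r. FF x y r < z) (at_left 1)"
        using order_tendstoD(2)[OF FF_lim_left1[OF xy] zg] .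
      then obtain d where d: "d < 1" "\<forall>r>d. r < 1 \<longrightarrow> FF x y r < z"
        by (auto simp: eventually_at_left_field)
      define c where "c = (max d a + 1)/2"
      have c: "a \<le> c" "c < 1" "FF x y c < z" using d a by (auto simp: c_def)
      have "continuous_on {a..c} (FF x y)" using a c by (intro FF_cont[OF xy]) auto
      then obtain r where "a \<le> r" "r \<le> c" "FF x y r = z"
        using IVT2'[of "FF x y" c z a] a c by auto
      then show ?thesis using a c by (intro exI[of _ r]) auto
    qed
    then obtain r where r: "0 < r" "r \<noteq> 1" "FF x y r = z" by blast
    then show ?thesis by (intro exI[of _ "ereal r"]) (simp add: frank_ereal)
  qed
qed

lemma frank_01:
  fixes u v :: real and l :: ereal
  assumes "0 \<le> l" "0 \<le> u" "u \<le> 1" "0 \<le> v" "v \<le> 1" "u = 0 \<or> u = 1 \<or> v = 0 \<or> v = 1"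
  shows "frank l u v = u * v"
proof -
  have "l = 0 \<or> l = 1 \<or> l = \<infinity> \<or> (\<exists>r. l = ereal r \<and> 0 < r \<and> r \<noteq> 1)"
  proof (cases l)
    case (real r)
    then show ?thesis using assms(1) by (auto simp: one_ereal_def zero_ereal_def)
  qed (use assms(1) in auto)
  then consider "l = 0" | "l = 1" | "l = \<infinity>" | r where "l = ereal r" "0 < r" "r \<noteq> 1"
    by blast
  then show ?thesis
  proof cases
    case 1 then show ?thesis using assms by (auto simp: frank_def)
  next
    case 2 then show ?thesis using assms by (auto simp: frank_def)
  next
    case 3 then show ?thesis using assms by (auto simp: frank_def)
  next
    case 4
    then have "frank l u v = FF u v r" by (simp add: frank_ereal)
    also have "\<dots> = u * v" using assms(6) 4 by (auto simp: FF_def)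
    finally show ?thesis .
  qed
qed



definition Gn :: "'w set \<Rightarrow> 'w set \<Rightarrow> 'w set \<Rightarrow> 'w set \<Rightarrow> real \<Rightarrow> real \<Rightarrow> real \<Rightarrow> real \<Rightarrow> real \<Rightarrow> real \<Rightarrow> 'w \<Rightarrow> real" where
  "Gn A H B K x y z s1 s2 s3 w = s1 * ind H w * (ind A w - x) + s2 * ind K w * (ind B w - y)
     + s3 * ind (H \<union> K) w * (conj_num A H B K x y w - z)"

definition cohP :: "'w set \<Rightarrow> 'w set \<Rightarrow> 'w set \<Rightarrow> 'w set \<Rightarrow> real \<Rightarrow> real \<Rightarrow> real \<Rightarrow> bool" where
  "cohP A H B K x y z \<longleftrightarrow> (\<forall>s1 s2 s3. (\<exists>w\<in>H\<union>K. Gn A H B K x y z s1 s2 s3 w \<le> 0)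
      \<and> (\<exists>w\<in>H\<union>K. 0 \<le> Gn A H B K x y z s1 s2 s3 w))"

lemma coh_to_P:
  assumes "coherent [(ind A, H), (ind B, K), (conj_num A H B K x y, H \<union> K)] [x, y, z]"
  shows "cohP A H B K x y z"
  unfolding cohP_def
proof (intro allI)
  fix s1 s2 s3
  from assms have "\<forall>s::nat\<Rightarrow>real. let G = (\<lambda>w. \<Sum>i<length [(ind A, H), (ind B, K), (conj_num A H B K x y, H \<union> K)]. s i *
     ind (snd ([(ind A, H), (ind B, K), (conj_num A H B K x y, H \<union> K)] ! i)) w *
     (fst ([(ind A, H), (ind B, K), (conj_num A H B K x y, H \<union> K)] ! i) w - [x, y, z] ! i));
            U = \<Union> (set (map snd [(ind A, H), (ind B, K), (conj_num A H B K x y, H \<union> K)]))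
        in (\<exists>w\<in>U. G w \<le> 0) \<and> (\<exists>w\<in>U. 0 \<le> G w)"
    unfolding coherent_def by blast
  from spec[OF this, of "\<lambda>i. if i=0 then s1 else if i=1 then s2 else s3"]
  show "(\<exists>w\<in>H\<union>K. Gn A H B K x y z s1 s2 s3 w \<le> 0) \<and> (\<exists>w\<in>H\<union>K. 0 \<le> Gn A H B K x y z s1 s2 s3 w)"
    by (simp add: Let_def numeral_3_eq_3 lessThan_Suc Gn_def Un_ac add_ac)
qed

lemma conj_num_sym: "conj_num B K A H y x w = conj_num A H B K x y w"
  by (simp add: conj_num_def ind_def Int_ac)

lemma cohP_sym: "cohP A H B K x y z \<Longrightarrow> cohP B K A H y x z"
  unfolding cohP_def
proof (intro allI)
  fix s1 s2 s3
  assume "\<forall>s1 s2 s3. (\<exists>w\<in>H\<union>K. Gn A H B K x y z s1 s2 s3 w \<le> 0) \<and> (\<exists>w\<in>H\<union>K. 0 \<le> Gn A H B K x y z s1 s2 s3 w)"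
  then have h: "(\<exists>w\<in>H\<union>K. Gn A H B K x y z s2 s1 s3 w \<le> 0) \<and> (\<exists>w\<in>H\<union>K. 0 \<le> Gn A H B K x y z s2 s1 s3 w)"
    by blast
  have e: "Gn B K A H y x z s1 s2 s3 w = Gn A H B K x y z s2 s1 s3 w" for w
    by (simp add: Gn_def conj_num_sym Un_commute)
  show "(\<exists>w\<in>K\<union>H. Gn B K A H y x z s1 s2 s3 w \<le> 0) \<and> (\<exists>w\<in>K\<union>H. 0 \<le> Gn B K A H y x z s1 s2 s3 w)"
    using h by (simp add: e Un_commute)
qed

lemma x_range:
  assumes P: "cohP A H B K x y z" and ne: "z \<noteq> x * y"
  shows "0 \<le> x \<and> x \<le> 1"
proof (rule ccontr)
  assume nx: "\<not> (0 \<le> x \<and> x \<le> 1)"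
  define d where "d = x * y - z"
  have d0: "d \<noteq> 0" using ne by (simp add: d_def)
  define s2 where "s2 = - x / d"
  define s3 where "s3 = 1 / d"
  define C where "C = \<bar>s2\<bar> * (1 + \<bar>y\<bar>) + \<bar>s3\<bar> * (1 + \<bar>x\<bar> + \<bar>y\<bar> + \<bar>z\<bar>)"
  have C0: "0 \<le> C" by (simp add: C_def)
  define s1 where "s1 = (if x < 0 then (C+1)/(-x) else -(C+1)/(x-1))"
  have s1a: "s1 * (a - x) \<ge> C + 1" if "a = 0 \<or> a = 1" for a
  proof (cases "x < 0")
    case True
    have "(C+1)/x < 0" using C0 True by (intro divide_pos_neg) auto
    then have "s1 > 0" using True by (simp add: s1_def)
    then have "s1 * (a - x) \<ge> s1 * (- x)" using that by (intro mult_left_mono) auto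
    moreover have "s1 * (-x) = C + 1" using True by (simp add: s1_def)
    ultimately show ?thesis by simp
  next
    case False
    then have x1: "x > 1" using nx by auto
    then have "s1 < 0" using C0 by (simp add: s1_def divide_neg_pos)
    then have "s1 * (a - x) \<ge> s1 * (1 - x)" using that by (intro mult_left_mono_neg) auto
    moreover have "s1 * (1 - x) = C + 1" using x1 False by (simp add: s1_def field_simps)
    ultimately show ?thesis by simp
  qed
  have pos: "Gn A H B K x y z s1 s2 s3 w > 0" if w: "w \<in> H \<union> K" for w
  proof (cases "w \<in> H")
    case False
    then have wK: "w \<in> K" using w by auto
    show ?thesis
    proof (cases "w \<in> B")
      case True
      then have "Gn A H B K x y z s1 s2 s3 w = s2 * (1 - y) + s3 * (x - z)"
        using False wK by (simp add: Gn_def conj_num_def ind_def)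
      also have "\<dots> = (x * y - z) / d" using d0 by (simp add: s2_def s3_def field_simps)
      also have "\<dots> = 1" using d0 by (simp add: d_def)
      finally show ?thesis by simp
    next
      case nB: False
      then have "Gn A H B K x y z s1 s2 s3 w = s2 * (- y) + s3 * (- z)"
        using False wK by (simp add: Gn_def conj_num_def ind_def)
      also have "\<dots> = (x * y - z) / d" using d0 by (simp add: s2_def s3_def field_simps)
      also have "\<dots> = 1" using d0 by (simp add: d_def)
      finally show ?thesis by simp
    qed
  next
    case True
    define R where "R = s2 * ind K w * (ind B w - y) + s3 * (conj_num A H B K x y w - z)"
    have G: "Gn A H B K x y z s1 s2 s3 w = s1 * (ind A w - x) + R"
      using True by (simp add: Gn_def R_def ind_def)
    have b1: "\<bar>ind K w * (ind B w - y)\<bar> \<le> 1 + \<bar>y\<bar>" by (auto simp: ind_def)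
    have b2: "\<bar>conj_num A H B K x y w - z\<bar> \<le> 1 + \<bar>x\<bar> + \<bar>y\<bar> + \<bar>z\<bar>"
      by (auto simp: conj_num_def ind_def)
    have "\<bar>R\<bar> \<le> \<bar>s2\<bar> * \<bar>ind K w * (ind B w - y)\<bar> + \<bar>s3\<bar> * \<bar>conj_num A H B K x y w - z\<bar>"
      unfolding R_def by (metis abs_mult abs_triangle_ineq mult.assoc)
    also have "\<dots> \<le> C" unfolding C_def
      by (intro add_mono mult_left_mono b1 b2) auto
    finally have "\<bar>R\<bar> \<le> C" .
    moreover have "s1 * (ind A w - x) \<ge> C + 1" by (rule s1a) (simp add: ind_def)
    ultimately show ?thesis using G by linarith
  qed
  from P obtain w where "w \<in> H \<union> K" "Gn A H B K x y z s1 s2 s3 w \<le> 0"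
    unfolding cohP_def by blast
  with pos show False by force
qed

lemma z_le_x:
  assumes P: "cohP A H B K x y z" and "0 \<le> x" "y \<le> 1"
  shows "z \<le> x"
proof (rule ccontr)
  assume "\<not> z \<le> x"
  from P obtain w where w: "w \<in> H \<union> K" "0 \<le> Gn A H B K x y z (-1) 0 1 w"
    unfolding cohP_def by blast
  then show False using assms \<open>\<not> z \<le> x\<close>
    by (auto simp: Gn_def conj_num_def ind_def split: if_splits)
qed

lemma z_ge0:
  assumes P: "cohP A H B K x y z" and "0 \<le> x" "0 \<le> y"
  shows "0 \<le> z"
proof -
  from P obtain w where w: "w \<in> H \<union> K" "Gn A H B K x y z 0 0 1 w \<le> 0"
    unfolding cohP_def by blast
  then show ?thesis using assms
    by (auto simp: Gn_def conj_num_def ind_def split: if_splits)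
qed

lemma z_ge:
  assumes P: "cohP A H B K x y z" and "x \<le> 1" "y \<le> 1"
  shows "x + y - 1 \<le> z"
proof -
  from P obtain w where w: "w \<in> H \<union> K" "0 \<le> Gn A H B K x y z 1 1 (-1) w"
    unfolding cohP_def by blast
  then show ?thesis using assms
    by (auto simp: Gn_def conj_num_def ind_def split: if_splits)
qed

lemma conj_prod: "w \<in> H \<union> K \<Longrightarrow> conj_ce A H B K x y z w = cond_event A H x w * cond_event B K y w"
  by (auto simp: conj_ce_def conj_num_def cond_event_def ind_def)

lemma conj_out: "w \<notin> H \<union> K \<Longrightarrow> conj_ce A H B K x y z w = z \<and> cond_event A H x w = x \<and> cond_event B K y w = y"
  by (auto simp: conj_ce_def conj_num_def cond_event_def ind_def)

theorem theorem15:
  fixes A B H K :: "'w set" and x y z :: real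
  assumes "H \<noteq> {}" and "K \<noteq> {}"
    and "coherent [(ind A, H), (ind B, K), (conj_num A H B K x y, H \<union> K)] [x, y, z]"
  shows "\<exists>l :: ereal. 0 \<le> l \<and>
    (\<forall>w. conj_ce A H B K x y z w = frank l (cond_event A H x w) (cond_event B K y w))"
proof -
  have P: "cohP A H B K x y z" using assms(3) by (rule coh_to_P)
  show ?thesis
  proof (cases "z = x * y")
    case True
    show ?thesis
    proof (intro exI[of _ 1] conjI allI)
      fix w
      show "conj_ce A H B K x y z w = frank 1 (cond_event A H x w) (cond_event B K y w)"
        using conj_prod[of w H K A B x y z] conj_out[of w H K A B x y z] True
        by (cases "w \<in> H \<union> K") (auto simp: frank_def)
    qed simp
  next
    case False
    have x: "0 \<le> x" "x \<le> 1" using x_range[OF P False] by auto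
    have y: "0 \<le> y" "y \<le> 1" using x_range[OF cohP_sym[OF P]] False by (auto simp: mult.commute)
    have z: "z \<le> x" "z \<le> y" "0 \<le> z" "x + y - 1 \<le> z"
      using z_le_x[OF P x(1) y(2)] z_le_x[OF cohP_sym[OF P] y(1) x(2)] z_ge0[OF P x(1) y(1)]
        z_ge[OF P x(2) y(2)] by auto
    obtain l where l: "0 \<le> l" "frank l x y = z"
      using frank_surj[of x y z] x y z by auto
    show ?thesis
    proof (intro exI[of _ l] conjI allI)
      fix w
      show "conj_ce A H B K x y z w = frank l (cond_event A H x w) (cond_event B K y w)"
      proof (cases "w \<in> H \<union> K")
        case True
        have u: "0 \<le> cond_event A H x w" "cond_event A H x w \<le> 1"
          "0 \<le> cond_event B K y w" "cond_event B K y w \<le> 1"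
          using x y by (auto simp: cond_event_def ind_def)
        have o: "cond_event A H x w = 0 \<or> cond_event A H x w = 1 \<or> cond_event B K y w = 0 \<or> cond_event B K y w = 1"
          using True by (auto simp: cond_event_def ind_def)
        show ?thesis using conj_prod[OF True] frank_01[OF l(1) u o] by simp
      next
        case False
        then show ?thesis using conj_out[OF False] l by simp
      qed
    qed (rule l(1))
  qed
qed

end
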